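(* Let $A\otimes B$ be a two-qubit Pauli operator with $A,B\in\{X,Y,Z\}$, and let $\rho$ be a valid two-qubit density matrix of the form $$\rho=\tfrac14\Big(I\otimes I+\sum_{q}c_q\,q\Big),\qquad c_q\in\mathbb{R}.$$ Here $q$ ranges over the five operators $A\otimes B$ and $A'\otimes B'$ with $A'\in\{X,Y,Z\}\setminus\{A\}$ and $B'\in\{X,Y,Z\}\setminus\{B\}$. Equivalently, $\rho$ is a Group 2 $X$-state with maximally-mixed subsystems, or a Mermin-state $\mathcal{Q}_i$, $i=1,\dots,9$, with all local coefficients zero. Let $\mathcal{M}(\rho)$ be the sum of the two largest eigenvalues of $\beta^T\beta$, where $\beta$ is the $3\times3$ real matrix with entries $\beta_{ij}=\operatorname{Tr}(\rho\,\sigma_i\otimes\sigma_j)$, $\sigma_1=X,\sigma_2=Y,\sigma_3=Z$. Then $\mathcal{M}(\rho)=2$ (i.e. $\rho$ violates the Bell (CHSH) inequality maximally) if and only if $\rho$ is pure, i.e. $\operatorname{Tr}(\rho^2)=1$.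
   Context: Valid means $\rho$ is Hermitian, of trace one and positive semidefinite. By the Horodecki criterion, a two-qubit state violates the Bell (CHSH) inequality iff $\mathcal{M}(\rho)>1$; maximal violation corresponds to the maximal possible value $\mathcal{M}(\rho)=2$. *)

theory Defs
  imports "Jordan_Normal_Form.Matrix" "Jordan_Normal_Form.Char_Poly"
          "HOL-Computational_Algebra.Polynomial" "HOL-Library.Multiset"
begin

(* Pauli matrices sigma_1 = X, sigma_2 = Y, sigma_3 = Z (index 0 = identity) *)
definition pauli :: "nat \<Rightarrow> complex mat" where
  "pauli k = (if k = 1 then mat_of_rows_list 2 [[0, 1], [1, 0]]
              else if k = 2 then mat_of_rows_list 2 [[0, -\<i>], [\<i>, 0]]
              else if k = 3 then mat_of_rows_list 2 [[1, 0], [0, -1]]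
              else 1\<^sub>m 2)"

definition kron :: "complex mat \<Rightarrow> complex mat \<Rightarrow> complex mat" where
  "kron A B = mat (dim_row A * dim_row B) (dim_col A * dim_col B)
     (\<lambda>(i, j). A $$ (i div dim_row B, j div dim_col B) * B $$ (i mod dim_row B, j mod dim_col B))"

definition mtrace :: "'a :: comm_ring_1 mat \<Rightarrow> 'a" where
  "mtrace M = (\<Sum>i < dim_row M. M $$ (i, i))"

definition msum :: "nat \<Rightarrow> 'b set \<Rightarrow> ('b \<Rightarrow> complex mat) \<Rightarrow> complex mat" where
  "msum n S f = mat n n (\<lambda>(i, j). \<Sum>q \<in> S. f q $$ (i, j))"

definition hermitian :: "complex mat \<Rightarrow> bool" where
  "hermitian M \<longleftrightarrow> dim_row M = dim_col M \<and>
     (\<forall>i < dim_row M. \<forall>j < dim_col M. M $$ (i, j) = cnj (M $$ (j, i)))"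

definition psd :: "complex mat \<Rightarrow> bool" where
  "psd M \<longleftrightarrow> (\<forall>v \<in> carrier_vec (dim_row M).
     0 \<le> Re (\<Sum>i < dim_row M. \<Sum>j < dim_col M. cnj (v $ i) * M $$ (i, j) * v $ j))"

definition valid_state :: "complex mat \<Rightarrow> bool" where
  "valid_state \<rho> \<longleftrightarrow> \<rho> \<in> carrier_mat 4 4 \<and> hermitian \<rho> \<and> mtrace \<rho> = 1 \<and> psd \<rho>"

(* correlation matrix beta_ij = Tr(rho sigma_i (x) sigma_j), i,j = 1..3 (0-based storage) *)
definition corr :: "complex mat \<Rightarrow> real mat" where
  "corr \<rho> = mat 3 3 (\<lambda>(i, j). Re (mtrace (\<rho> * kron (pauli (i + 1)) (pauli (j + 1)))))"

definition eigvals_ms :: "real mat \<Rightarrow> real multiset" where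
  "eigvals_ms M = proots (char_poly M)"

definition horodecki_M :: "complex mat \<Rightarrow> real" where
  "horodecki_M \<rho> = (let \<beta> = corr \<rho> in
     sum_list (take 2 (rev (sorted_list_of_multiset (eigvals_ms (transpose_mat \<beta> * \<beta>))))))"

definition support_pairs :: "nat \<Rightarrow> nat \<Rightarrow> (nat \<times> nat) set" where
  "support_pairs a b = {(a, b)} \<union> {(i, j). i \<in> {1, 2, 3} - {a} \<and> j \<in> {1, 2, 3} - {b}}"

end

theory Submission
  imports Defs
begin

definition rho_of :: "nat \<Rightarrow> nat \<Rightarrow> (nat \<Rightarrow> nat \<Rightarrow> real) \<Rightarrow> complex mat" where
 "rho_of a b c = (1 / 4 :: complex) \<cdot>\<^sub>m (kron (pauli 0) (pauli 0) +
           msum 4 (support_pairs a b) (\<lambda>q. complex_of_real (c (fst q) (snd q)) \<cdot>\<^sub>m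
               kron (pauli (fst q)) (pauli (snd q))))"

lemma sum4: "(\<Sum>i<(4::nat). f i) = f 0 + f 1 + f 2 + (f 3 :: 'a::comm_monoid_add)"
  by (simp add: numeral_eq_Suc lessThan_Suc add.commute add.left_commute)

definition pe :: "nat \<Rightarrow> nat \<Rightarrow> nat \<Rightarrow> complex" where
  "pe k i j = (if k = 1 then (if i = j then 0 else 1)
              else if k = 2 then (if i = j then 0 else if i = 0 then -\<i> else \<i>)
              else if k = 3 then (if i = j then (if i = 0 then 1 else -1) else 0)
              else (if i = j then 1 else 0))"

lemma pauli_dim[simp]: "dim_row (pauli k) = 2" "dim_col (pauli k) = 2"
  by (auto simp: pauli_def mat_of_rows_list_def)

lemma pauli_idx: "i < 2 \<Longrightarrow> j < 2 \<Longrightarrow> pauli k $$ (i,j) = pe k i j"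
  by (auto simp: pauli_def pe_def mat_of_rows_list_def less_2_cases_iff)

lemma kron_dim[simp]: "dim_row (kron A B) = dim_row A * dim_row B" "dim_col (kron A B) = dim_col A * dim_col B"
  by (auto simp: kron_def)

lemma kron_pauli_idx: "i < 4 \<Longrightarrow> j < 4 \<Longrightarrow> kron (pauli k) (pauli l) $$ (i,j) = pe k (i div 2) (j div 2) * pe l (i mod 2) (j mod 2)"
  by (auto simp: kron_def pauli_idx less_mult_imp_div_less)

lemma rho_dim[simp]: "dim_row (rho_of a b c) = 4" "dim_col (rho_of a b c) = 4"
  by (auto simp: rho_of_def msum_def)

lemma rho_entry: "i < 4 \<Longrightarrow> j < 4 \<Longrightarrow> rho_of a b c $$ (i,j) = (1/4) * (pe 0 (i div 2) (j div 2) * pe 0 (i mod 2) (j mod 2) + (\<Sum>q\<in>support_pairs a b. complex_of_real (c (fst q) (snd q)) * (pe (fst q) (i div 2) (j div 2) * pe (snd q) (i mod 2) (j mod 2))))"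
  by (simp add: rho_of_def msum_def kron_pauli_idx)

definition oth1 :: "nat \<Rightarrow> nat" where "oth1 a = (if a = 1 then 2 else 1)"
definition oth2 :: "nat \<Rightarrow> nat" where "oth2 a = (if a = 3 then 2 else 3)"

lemma pairs4: "{(i,j). i \<in> {x,y} \<and> j \<in> {u,v}} = {(x,u),(x,v),(y,u),(y,v)}"
  by auto

lemma diff3: "{1,2,3::nat} - {1} = {2,3}" "{1,2,3::nat} - {2} = {1,3}" "{1,2,3::nat} - {3} = {1,2}"
  by auto

lemma sp11: "support_pairs 1 1 = {(1,1),(2,2),(2,3),(3,2),(3,3)}"
  unfolding support_pairs_def diff3 pairs4 by auto
lemma sp12: "support_pairs 1 2 = {(1,2),(2,1),(2,3),(3,1),(3,3)}"
  unfolding support_pairs_def diff3 pairs4 by auto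
lemma sp13: "support_pairs 1 3 = {(1,3),(2,1),(2,2),(3,1),(3,2)}"
  unfolding support_pairs_def diff3 pairs4 by auto
lemma sp21: "support_pairs 2 1 = {(2,1),(1,2),(1,3),(3,2),(3,3)}"
  unfolding support_pairs_def diff3 pairs4 by auto
lemma sp22: "support_pairs 2 2 = {(2,2),(1,1),(1,3),(3,1),(3,3)}"
  unfolding support_pairs_def diff3 pairs4 by auto
lemma sp23: "support_pairs 2 3 = {(2,3),(1,1),(1,2),(3,1),(3,2)}"
  unfolding support_pairs_def diff3 pairs4 by auto
lemma sp31: "support_pairs 3 1 = {(3,1),(1,2),(1,3),(2,2),(2,3)}"
  unfolding support_pairs_def diff3 pairs4 by auto
lemma sp32: "support_pairs 3 2 = {(3,2),(1,1),(1,3),(2,1),(2,3)}"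
  unfolding support_pairs_def diff3 pairs4 by auto
lemma sp33: "support_pairs 3 3 = {(3,3),(1,1),(1,2),(2,1),(2,2)}"
  unfolding support_pairs_def diff3 pairs4 by auto
lemmas sps0 = sp11 sp12 sp13 sp21 sp22 sp23 sp31 sp32 sp33
lemmas sps = sps0 sps0[unfolded One_nat_def]

lemma mtrace_mult4: "A \<in> carrier_mat 4 4 \<Longrightarrow> B \<in> carrier_mat 4 4 \<Longrightarrow> mtrace (A * B) = (\<Sum>i<4. \<Sum>k<4. A $$ (i,k) * B $$ (k,i))"
  unfolding mtrace_def
  apply (rule sum.cong)
  apply (simp add: carrier_matD)
  apply (subst index_mult_mat)
  apply (auto simp: scalar_prod_def carrier_matD lessThan_atLeast0 intro!: sum.cong)
  done

lemma rho_carrier: "rho_of a b c \<in> carrier_mat 4 4" by (rule carrier_matI; simp)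
lemma kron_carrier: "kron (pauli k) (pauli l) \<in> carrier_mat 4 4" by (rule carrier_matI; simp)

lemma less3: "(i::nat) < 3 \<longleftrightarrow> i = 0 \<or> i = 1 \<or> i = 2" by auto

lemma sum2: "(\<Sum>i<(2::nat). f i) = f 0 + (f 1 :: 'a::comm_monoid_add)"
  by (simp add: numeral_eq_Suc lessThan_Suc add.commute)
lemma sum3: "(\<Sum>i<(3::nat). f i) = f 0 + f 1 + (f 2 :: 'a::comm_monoid_add)"
  by (simp add: numeral_eq_Suc lessThan_Suc add.commute add.left_commute)

lemma det2: assumes "(A :: 'a :: comm_ring_1 mat) \<in> carrier_mat 2 2"
  shows "det A = A $$ (0,0) * A $$ (1,1) - A $$ (0,1) * A $$ (1,0)"
proof -
  have "det A = (\<Sum>i<2. A $$ (i,0) * cofactor A i 0)"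
    by (rule laplace_expansion_column[OF assms], simp)
  also have "\<dots> = A $$ (0,0) * A $$ (1,1) - A $$ (0,1) * A $$ (1,0)"
    using assms
    by (simp add: sum2 cofactor_def det_single mat_delete_def insert_index_def)
  finally show ?thesis .
qed

lemma det3: assumes "(A :: 'a :: comm_ring_1 mat) \<in> carrier_mat 3 3"
  shows "det A = A $$ (0,0) * (A $$ (1,1) * A $$ (2,2) - A $$ (1,2) * A $$ (2,1))
     - A $$ (1,0) * (A $$ (0,1) * A $$ (2,2) - A $$ (0,2) * A $$ (2,1))
     + A $$ (2,0) * (A $$ (0,1) * A $$ (1,2) - A $$ (0,2) * A $$ (1,1))" (is "_ = ?rhs")
proof -
  have "det A = (\<Sum>i<3. A $$ (i,0) * cofactor A i 0)"
    by (rule laplace_expansion_column[OF assms], simp)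
  also have "\<dots> = ?rhs"
    using assms
    by (simp add: sum3 cofactor_def det2 mat_delete_def insert_index_def algebra_simps numeral_2_eq_2)
  finally show ?thesis .
qed

lemma abcases: assumes "a \<in> {1,2,3::nat}" "b \<in> {1,2,3::nat}"
  obtains "a = 1" "b = 1" | "a = 1" "b = 2" | "a = 1" "b = 3" | "a = 2" "b = 1" | "a = 2" "b = 2" | "a = 2" "b = 3"
   | "a = 3" "b = 1" | "a = 3" "b = 2" | "a = 3" "b = 3"
  using assms by auto


definition TT :: "nat \<Rightarrow> nat \<Rightarrow> (nat \<Rightarrow> nat \<Rightarrow> real) \<Rightarrow> real" where
  "TT a b c = (c (oth1 a) (oth1 b))^2 + (c (oth1 a) (oth2 b))^2 + (c (oth2 a) (oth1 b))^2 + (c (oth2 a) (oth2 b))^2"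
definition DD :: "nat \<Rightarrow> nat \<Rightarrow> (nat \<Rightarrow> nat \<Rightarrow> real) \<Rightarrow> real" where
  "DD a b c = c (oth1 a) (oth1 b) * c (oth2 a) (oth2 b) - c (oth1 a) (oth2 b) * c (oth2 a) (oth1 b)"

definition betaM :: "nat \<Rightarrow> nat \<Rightarrow> (nat \<Rightarrow> nat \<Rightarrow> real) \<Rightarrow> real mat" where
  "betaM a b c = mat 3 3 (\<lambda>(i,j). if (Suc i, Suc j) \<in> support_pairs a b then c (Suc i) (Suc j) else 0)"

lemma re11_00: "rho_of 1 1 c $$ (0,0) = Complex ((1 + c 3 3) / 4) (0)"
  by (simp add: rho_entry sps pe_def complex_eq_iff)
lemma re11_01: "rho_of 1 1 c $$ (0,1) = Complex (0) ((- c 3 2) / 4)"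
  by (simp add: rho_entry sps pe_def complex_eq_iff)
lemma re11_02: "rho_of 1 1 c $$ (0,2) = Complex (0) ((- c 2 3) / 4)"
  by (simp add: rho_entry sps pe_def complex_eq_iff)
lemma re11_03: "rho_of 1 1 c $$ (0,3) = Complex ((c 1 1 - c 2 2) / 4) (0)"
  by (simp add: rho_entry sps pe_def complex_eq_iff)
lemma re11_10: "rho_of 1 1 c $$ (1,0) = Complex (0) ((c 3 2) / 4)"
  by (simp add: rho_entry sps pe_def complex_eq_iff)
lemma re11_11: "rho_of 1 1 c $$ (1,1) = Complex ((1 - c 3 3) / 4) (0)"
  by (simp add: rho_entry sps pe_def complex_eq_iff)
lemma re11_12: "rho_of 1 1 c $$ (1,2) = Complex ((c 1 1 + c 2 2) / 4) (0)"
  by (simp add: rho_entry sps pe_def complex_eq_iff)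
lemma re11_13: "rho_of 1 1 c $$ (1,3) = Complex (0) ((c 2 3) / 4)"
  by (simp add: rho_entry sps pe_def complex_eq_iff)
lemma re11_20: "rho_of 1 1 c $$ (2,0) = Complex (0) ((c 2 3) / 4)"
  by (simp add: rho_entry sps pe_def complex_eq_iff)
lemma re11_21: "rho_of 1 1 c $$ (2,1) = Complex ((c 1 1 + c 2 2) / 4) (0)"
  by (simp add: rho_entry sps pe_def complex_eq_iff)
lemma re11_22: "rho_of 1 1 c $$ (2,2) = Complex ((1 - c 3 3) / 4) (0)"
  by (simp add: rho_entry sps pe_def complex_eq_iff)
lemma re11_23: "rho_of 1 1 c $$ (2,3) = Complex (0) ((c 3 2) / 4)"
  by (simp add: rho_entry sps pe_def complex_eq_iff)
lemma re11_30: "rho_of 1 1 c $$ (3,0) = Complex ((c 1 1 - c 2 2) / 4) (0)"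
  by (simp add: rho_entry sps pe_def complex_eq_iff)
lemma re11_31: "rho_of 1 1 c $$ (3,1) = Complex (0) ((- c 2 3) / 4)"
  by (simp add: rho_entry sps pe_def complex_eq_iff)
lemma re11_32: "rho_of 1 1 c $$ (3,2) = Complex (0) ((- c 3 2) / 4)"
  by (simp add: rho_entry sps pe_def complex_eq_iff)
lemma re11_33: "rho_of 1 1 c $$ (3,3) = Complex ((1 + c 3 3) / 4) (0)"
  by (simp add: rho_entry sps pe_def complex_eq_iff)
lemma re12_00: "rho_of 1 2 c $$ (0,0) = Complex ((1 + c 3 3) / 4) (0)"
  by (simp add: rho_entry sps pe_def complex_eq_iff)
lemma re12_01: "rho_of 1 2 c $$ (0,1) = Complex ((c 3 1) / 4) (0)"
  by (simp add: rho_entry sps pe_def complex_eq_iff)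
lemma re12_02: "rho_of 1 2 c $$ (0,2) = Complex (0) ((- c 2 3) / 4)"
  by (simp add: rho_entry sps pe_def complex_eq_iff)
lemma re12_03: "rho_of 1 2 c $$ (0,3) = Complex (0) ((- c 1 2 - c 2 1) / 4)"
  by (simp add: rho_entry sps pe_def complex_eq_iff)
lemma re12_10: "rho_of 1 2 c $$ (1,0) = Complex ((c 3 1) / 4) (0)"
  by (simp add: rho_entry sps pe_def complex_eq_iff)
lemma re12_11: "rho_of 1 2 c $$ (1,1) = Complex ((1 - c 3 3) / 4) (0)"
  by (simp add: rho_entry sps pe_def complex_eq_iff)
lemma re12_12: "rho_of 1 2 c $$ (1,2) = Complex (0) ((c 1 2 - c 2 1) / 4)"
  by (simp add: rho_entry sps pe_def complex_eq_iff)
lemma re12_13: "rho_of 1 2 c $$ (1,3) = Complex (0) ((c 2 3) / 4)"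
  by (simp add: rho_entry sps pe_def complex_eq_iff)
lemma re12_20: "rho_of 1 2 c $$ (2,0) = Complex (0) ((c 2 3) / 4)"
  by (simp add: rho_entry sps pe_def complex_eq_iff)
lemma re12_21: "rho_of 1 2 c $$ (2,1) = Complex (0) ((- c 1 2 + c 2 1) / 4)"
  by (simp add: rho_entry sps pe_def complex_eq_iff)
lemma re12_22: "rho_of 1 2 c $$ (2,2) = Complex ((1 - c 3 3) / 4) (0)"
  by (simp add: rho_entry sps pe_def complex_eq_iff)
lemma re12_23: "rho_of 1 2 c $$ (2,3) = Complex ((- c 3 1) / 4) (0)"
  by (simp add: rho_entry sps pe_def complex_eq_iff)
lemma re12_30: "rho_of 1 2 c $$ (3,0) = Complex (0) ((c 1 2 + c 2 1) / 4)"
  by (simp add: rho_entry sps pe_def complex_eq_iff)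
lemma re12_31: "rho_of 1 2 c $$ (3,1) = Complex (0) ((- c 2 3) / 4)"
  by (simp add: rho_entry sps pe_def complex_eq_iff)
lemma re12_32: "rho_of 1 2 c $$ (3,2) = Complex ((- c 3 1) / 4) (0)"
  by (simp add: rho_entry sps pe_def complex_eq_iff)
lemma re12_33: "rho_of 1 2 c $$ (3,3) = Complex ((1 + c 3 3) / 4) (0)"
  by (simp add: rho_entry sps pe_def complex_eq_iff)
lemma re13_00: "rho_of 1 3 c $$ (0,0) = Complex ((1) / 4) (0)"
  by (simp add: rho_entry sps pe_def complex_eq_iff)
lemma re13_01: "rho_of 1 3 c $$ (0,1) = Complex ((c 3 1) / 4) ((- c 3 2) / 4)"
  by (simp add: rho_entry sps pe_def complex_eq_iff)
lemma re13_02: "rho_of 1 3 c $$ (0,2) = Complex ((c 1 3) / 4) (0)"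
  by (simp add: rho_entry sps pe_def complex_eq_iff)
lemma re13_03: "rho_of 1 3 c $$ (0,3) = Complex ((- c 2 2) / 4) ((- c 2 1) / 4)"
  by (simp add: rho_entry sps pe_def complex_eq_iff)
lemma re13_10: "rho_of 1 3 c $$ (1,0) = Complex ((c 3 1) / 4) ((c 3 2) / 4)"
  by (simp add: rho_entry sps pe_def complex_eq_iff)
lemma re13_11: "rho_of 1 3 c $$ (1,1) = Complex ((1) / 4) (0)"
  by (simp add: rho_entry sps pe_def complex_eq_iff)
lemma re13_12: "rho_of 1 3 c $$ (1,2) = Complex ((c 2 2) / 4) ((- c 2 1) / 4)"
  by (simp add: rho_entry sps pe_def complex_eq_iff)
lemma re13_13: "rho_of 1 3 c $$ (1,3) = Complex ((- c 1 3) / 4) (0)"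
  by (simp add: rho_entry sps pe_def complex_eq_iff)
lemma re13_20: "rho_of 1 3 c $$ (2,0) = Complex ((c 1 3) / 4) (0)"
  by (simp add: rho_entry sps pe_def complex_eq_iff)
lemma re13_21: "rho_of 1 3 c $$ (2,1) = Complex ((c 2 2) / 4) ((c 2 1) / 4)"
  by (simp add: rho_entry sps pe_def complex_eq_iff)
lemma re13_22: "rho_of 1 3 c $$ (2,2) = Complex ((1) / 4) (0)"
  by (simp add: rho_entry sps pe_def complex_eq_iff)
lemma re13_23: "rho_of 1 3 c $$ (2,3) = Complex ((- c 3 1) / 4) ((c 3 2) / 4)"
  by (simp add: rho_entry sps pe_def complex_eq_iff)
lemma re13_30: "rho_of 1 3 c $$ (3,0) = Complex ((- c 2 2) / 4) ((c 2 1) / 4)"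
  by (simp add: rho_entry sps pe_def complex_eq_iff)
lemma re13_31: "rho_of 1 3 c $$ (3,1) = Complex ((- c 1 3) / 4) (0)"
  by (simp add: rho_entry sps pe_def complex_eq_iff)
lemma re13_32: "rho_of 1 3 c $$ (3,2) = Complex ((- c 3 1) / 4) ((- c 3 2) / 4)"
  by (simp add: rho_entry sps pe_def complex_eq_iff)
lemma re13_33: "rho_of 1 3 c $$ (3,3) = Complex ((1) / 4) (0)"
  by (simp add: rho_entry sps pe_def complex_eq_iff)
lemma re21_00: "rho_of 2 1 c $$ (0,0) = Complex ((1 + c 3 3) / 4) (0)"
  by (simp add: rho_entry sps pe_def complex_eq_iff)
lemma re21_01: "rho_of 2 1 c $$ (0,1) = Complex (0) ((- c 3 2) / 4)"
  by (simp add: rho_entry sps pe_def complex_eq_iff)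
lemma re21_02: "rho_of 2 1 c $$ (0,2) = Complex ((c 1 3) / 4) (0)"
  by (simp add: rho_entry sps pe_def complex_eq_iff)
lemma re21_03: "rho_of 2 1 c $$ (0,3) = Complex (0) ((- c 2 1 - c 1 2) / 4)"
  by (simp add: rho_entry sps pe_def complex_eq_iff)
lemma re21_10: "rho_of 2 1 c $$ (1,0) = Complex (0) ((c 3 2) / 4)"
  by (simp add: rho_entry sps pe_def complex_eq_iff)
lemma re21_11: "rho_of 2 1 c $$ (1,1) = Complex ((1 - c 3 3) / 4) (0)"
  by (simp add: rho_entry sps pe_def complex_eq_iff)
lemma re21_12: "rho_of 2 1 c $$ (1,2) = Complex (0) ((- c 2 1 + c 1 2) / 4)"
  by (simp add: rho_entry sps pe_def complex_eq_iff)
lemma re21_13: "rho_of 2 1 c $$ (1,3) = Complex ((- c 1 3) / 4) (0)"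
  by (simp add: rho_entry sps pe_def complex_eq_iff)
lemma re21_20: "rho_of 2 1 c $$ (2,0) = Complex ((c 1 3) / 4) (0)"
  by (simp add: rho_entry sps pe_def complex_eq_iff)
lemma re21_21: "rho_of 2 1 c $$ (2,1) = Complex (0) ((c 2 1 - c 1 2) / 4)"
  by (simp add: rho_entry sps pe_def complex_eq_iff)
lemma re21_22: "rho_of 2 1 c $$ (2,2) = Complex ((1 - c 3 3) / 4) (0)"
  by (simp add: rho_entry sps pe_def complex_eq_iff)
lemma re21_23: "rho_of 2 1 c $$ (2,3) = Complex (0) ((c 3 2) / 4)"
  by (simp add: rho_entry sps pe_def complex_eq_iff)
lemma re21_30: "rho_of 2 1 c $$ (3,0) = Complex (0) ((c 2 1 + c 1 2) / 4)"
  by (simp add: rho_entry sps pe_def complex_eq_iff)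
lemma re21_31: "rho_of 2 1 c $$ (3,1) = Complex ((- c 1 3) / 4) (0)"
  by (simp add: rho_entry sps pe_def complex_eq_iff)
lemma re21_32: "rho_of 2 1 c $$ (3,2) = Complex (0) ((- c 3 2) / 4)"
  by (simp add: rho_entry sps pe_def complex_eq_iff)
lemma re21_33: "rho_of 2 1 c $$ (3,3) = Complex ((1 + c 3 3) / 4) (0)"
  by (simp add: rho_entry sps pe_def complex_eq_iff)
lemma re22_00: "rho_of 2 2 c $$ (0,0) = Complex ((1 + c 3 3) / 4) (0)"
  by (simp add: rho_entry sps pe_def complex_eq_iff)
lemma re22_01: "rho_of 2 2 c $$ (0,1) = Complex ((c 3 1) / 4) (0)"
  by (simp add: rho_entry sps pe_def complex_eq_iff)
lemma re22_02: "rho_of 2 2 c $$ (0,2) = Complex ((c 1 3) / 4) (0)"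
  by (simp add: rho_entry sps pe_def complex_eq_iff)
lemma re22_03: "rho_of 2 2 c $$ (0,3) = Complex ((- c 2 2 + c 1 1) / 4) (0)"
  by (simp add: rho_entry sps pe_def complex_eq_iff)
lemma re22_10: "rho_of 2 2 c $$ (1,0) = Complex ((c 3 1) / 4) (0)"
  by (simp add: rho_entry sps pe_def complex_eq_iff)
lemma re22_11: "rho_of 2 2 c $$ (1,1) = Complex ((1 - c 3 3) / 4) (0)"
  by (simp add: rho_entry sps pe_def complex_eq_iff)
lemma re22_12: "rho_of 2 2 c $$ (1,2) = Complex ((c 2 2 + c 1 1) / 4) (0)"
  by (simp add: rho_entry sps pe_def complex_eq_iff)
lemma re22_13: "rho_of 2 2 c $$ (1,3) = Complex ((- c 1 3) / 4) (0)"
  by (simp add: rho_entry sps pe_def complex_eq_iff)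
lemma re22_20: "rho_of 2 2 c $$ (2,0) = Complex ((c 1 3) / 4) (0)"
  by (simp add: rho_entry sps pe_def complex_eq_iff)
lemma re22_21: "rho_of 2 2 c $$ (2,1) = Complex ((c 2 2 + c 1 1) / 4) (0)"
  by (simp add: rho_entry sps pe_def complex_eq_iff)
lemma re22_22: "rho_of 2 2 c $$ (2,2) = Complex ((1 - c 3 3) / 4) (0)"
  by (simp add: rho_entry sps pe_def complex_eq_iff)
lemma re22_23: "rho_of 2 2 c $$ (2,3) = Complex ((- c 3 1) / 4) (0)"
  by (simp add: rho_entry sps pe_def complex_eq_iff)
lemma re22_30: "rho_of 2 2 c $$ (3,0) = Complex ((- c 2 2 + c 1 1) / 4) (0)"
  by (simp add: rho_entry sps pe_def complex_eq_iff)
lemma re22_31: "rho_of 2 2 c $$ (3,1) = Complex ((- c 1 3) / 4) (0)"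
  by (simp add: rho_entry sps pe_def complex_eq_iff)
lemma re22_32: "rho_of 2 2 c $$ (3,2) = Complex ((- c 3 1) / 4) (0)"
  by (simp add: rho_entry sps pe_def complex_eq_iff)
lemma re22_33: "rho_of 2 2 c $$ (3,3) = Complex ((1 + c 3 3) / 4) (0)"
  by (simp add: rho_entry sps pe_def complex_eq_iff)
lemma re23_00: "rho_of 2 3 c $$ (0,0) = Complex ((1) / 4) (0)"
  by (simp add: rho_entry sps pe_def complex_eq_iff)
lemma re23_01: "rho_of 2 3 c $$ (0,1) = Complex ((c 3 1) / 4) ((- c 3 2) / 4)"
  by (simp add: rho_entry sps pe_def complex_eq_iff)
lemma re23_02: "rho_of 2 3 c $$ (0,2) = Complex (0) ((- c 2 3) / 4)"
  by (simp add: rho_entry sps pe_def complex_eq_iff)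
lemma re23_03: "rho_of 2 3 c $$ (0,3) = Complex ((c 1 1) / 4) ((- c 1 2) / 4)"
  by (simp add: rho_entry sps pe_def complex_eq_iff)
lemma re23_10: "rho_of 2 3 c $$ (1,0) = Complex ((c 3 1) / 4) ((c 3 2) / 4)"
  by (simp add: rho_entry sps pe_def complex_eq_iff)
lemma re23_11: "rho_of 2 3 c $$ (1,1) = Complex ((1) / 4) (0)"
  by (simp add: rho_entry sps pe_def complex_eq_iff)
lemma re23_12: "rho_of 2 3 c $$ (1,2) = Complex ((c 1 1) / 4) ((c 1 2) / 4)"
  by (simp add: rho_entry sps pe_def complex_eq_iff)
lemma re23_13: "rho_of 2 3 c $$ (1,3) = Complex (0) ((c 2 3) / 4)"
  by (simp add: rho_entry sps pe_def complex_eq_iff)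
lemma re23_20: "rho_of 2 3 c $$ (2,0) = Complex (0) ((c 2 3) / 4)"
  by (simp add: rho_entry sps pe_def complex_eq_iff)
lemma re23_21: "rho_of 2 3 c $$ (2,1) = Complex ((c 1 1) / 4) ((- c 1 2) / 4)"
  by (simp add: rho_entry sps pe_def complex_eq_iff)
lemma re23_22: "rho_of 2 3 c $$ (2,2) = Complex ((1) / 4) (0)"
  by (simp add: rho_entry sps pe_def complex_eq_iff)
lemma re23_23: "rho_of 2 3 c $$ (2,3) = Complex ((- c 3 1) / 4) ((c 3 2) / 4)"
  by (simp add: rho_entry sps pe_def complex_eq_iff)
lemma re23_30: "rho_of 2 3 c $$ (3,0) = Complex ((c 1 1) / 4) ((c 1 2) / 4)"
  by (simp add: rho_entry sps pe_def complex_eq_iff)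
lemma re23_31: "rho_of 2 3 c $$ (3,1) = Complex (0) ((- c 2 3) / 4)"
  by (simp add: rho_entry sps pe_def complex_eq_iff)
lemma re23_32: "rho_of 2 3 c $$ (3,2) = Complex ((- c 3 1) / 4) ((- c 3 2) / 4)"
  by (simp add: rho_entry sps pe_def complex_eq_iff)
lemma re23_33: "rho_of 2 3 c $$ (3,3) = Complex ((1) / 4) (0)"
  by (simp add: rho_entry sps pe_def complex_eq_iff)
lemma re31_00: "rho_of 3 1 c $$ (0,0) = Complex ((1) / 4) (0)"
  by (simp add: rho_entry sps pe_def complex_eq_iff)
lemma re31_01: "rho_of 3 1 c $$ (0,1) = Complex ((c 3 1) / 4) (0)"
  by (simp add: rho_entry sps pe_def complex_eq_iff)
lemma re31_02: "rho_of 3 1 c $$ (0,2) = Complex ((c 1 3) / 4) ((- c 2 3) / 4)"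
  by (simp add: rho_entry sps pe_def complex_eq_iff)
lemma re31_03: "rho_of 3 1 c $$ (0,3) = Complex ((- c 2 2) / 4) ((- c 1 2) / 4)"
  by (simp add: rho_entry sps pe_def complex_eq_iff)
lemma re31_10: "rho_of 3 1 c $$ (1,0) = Complex ((c 3 1) / 4) (0)"
  by (simp add: rho_entry sps pe_def complex_eq_iff)
lemma re31_11: "rho_of 3 1 c $$ (1,1) = Complex ((1) / 4) (0)"
  by (simp add: rho_entry sps pe_def complex_eq_iff)
lemma re31_12: "rho_of 3 1 c $$ (1,2) = Complex ((c 2 2) / 4) ((c 1 2) / 4)"
  by (simp add: rho_entry sps pe_def complex_eq_iff)
lemma re31_13: "rho_of 3 1 c $$ (1,3) = Complex ((- c 1 3) / 4) ((c 2 3) / 4)"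
  by (simp add: rho_entry sps pe_def complex_eq_iff)
lemma re31_20: "rho_of 3 1 c $$ (2,0) = Complex ((c 1 3) / 4) ((c 2 3) / 4)"
  by (simp add: rho_entry sps pe_def complex_eq_iff)
lemma re31_21: "rho_of 3 1 c $$ (2,1) = Complex ((c 2 2) / 4) ((- c 1 2) / 4)"
  by (simp add: rho_entry sps pe_def complex_eq_iff)
lemma re31_22: "rho_of 3 1 c $$ (2,2) = Complex ((1) / 4) (0)"
  by (simp add: rho_entry sps pe_def complex_eq_iff)
lemma re31_23: "rho_of 3 1 c $$ (2,3) = Complex ((- c 3 1) / 4) (0)"
  by (simp add: rho_entry sps pe_def complex_eq_iff)
lemma re31_30: "rho_of 3 1 c $$ (3,0) = Complex ((- c 2 2) / 4) ((c 1 2) / 4)"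
  by (simp add: rho_entry sps pe_def complex_eq_iff)
lemma re31_31: "rho_of 3 1 c $$ (3,1) = Complex ((- c 1 3) / 4) ((- c 2 3) / 4)"
  by (simp add: rho_entry sps pe_def complex_eq_iff)
lemma re31_32: "rho_of 3 1 c $$ (3,2) = Complex ((- c 3 1) / 4) (0)"
  by (simp add: rho_entry sps pe_def complex_eq_iff)
lemma re31_33: "rho_of 3 1 c $$ (3,3) = Complex ((1) / 4) (0)"
  by (simp add: rho_entry sps pe_def complex_eq_iff)
lemma re32_00: "rho_of 3 2 c $$ (0,0) = Complex ((1) / 4) (0)"
  by (simp add: rho_entry sps pe_def complex_eq_iff)
lemma re32_01: "rho_of 3 2 c $$ (0,1) = Complex (0) ((- c 3 2) / 4)"
  by (simp add: rho_entry sps pe_def complex_eq_iff)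
lemma re32_02: "rho_of 3 2 c $$ (0,2) = Complex ((c 1 3) / 4) ((- c 2 3) / 4)"
  by (simp add: rho_entry sps pe_def complex_eq_iff)
lemma re32_03: "rho_of 3 2 c $$ (0,3) = Complex ((c 1 1) / 4) ((- c 2 1) / 4)"
  by (simp add: rho_entry sps pe_def complex_eq_iff)
lemma re32_10: "rho_of 3 2 c $$ (1,0) = Complex (0) ((c 3 2) / 4)"
  by (simp add: rho_entry sps pe_def complex_eq_iff)
lemma re32_11: "rho_of 3 2 c $$ (1,1) = Complex ((1) / 4) (0)"
  by (simp add: rho_entry sps pe_def complex_eq_iff)
lemma re32_12: "rho_of 3 2 c $$ (1,2) = Complex ((c 1 1) / 4) ((- c 2 1) / 4)"
  by (simp add: rho_entry sps pe_def complex_eq_iff)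
lemma re32_13: "rho_of 3 2 c $$ (1,3) = Complex ((- c 1 3) / 4) ((c 2 3) / 4)"
  by (simp add: rho_entry sps pe_def complex_eq_iff)
lemma re32_20: "rho_of 3 2 c $$ (2,0) = Complex ((c 1 3) / 4) ((c 2 3) / 4)"
  by (simp add: rho_entry sps pe_def complex_eq_iff)
lemma re32_21: "rho_of 3 2 c $$ (2,1) = Complex ((c 1 1) / 4) ((c 2 1) / 4)"
  by (simp add: rho_entry sps pe_def complex_eq_iff)
lemma re32_22: "rho_of 3 2 c $$ (2,2) = Complex ((1) / 4) (0)"
  by (simp add: rho_entry sps pe_def complex_eq_iff)
lemma re32_23: "rho_of 3 2 c $$ (2,3) = Complex (0) ((c 3 2) / 4)"
  by (simp add: rho_entry sps pe_def complex_eq_iff)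
lemma re32_30: "rho_of 3 2 c $$ (3,0) = Complex ((c 1 1) / 4) ((c 2 1) / 4)"
  by (simp add: rho_entry sps pe_def complex_eq_iff)
lemma re32_31: "rho_of 3 2 c $$ (3,1) = Complex ((- c 1 3) / 4) ((- c 2 3) / 4)"
  by (simp add: rho_entry sps pe_def complex_eq_iff)
lemma re32_32: "rho_of 3 2 c $$ (3,2) = Complex (0) ((- c 3 2) / 4)"
  by (simp add: rho_entry sps pe_def complex_eq_iff)
lemma re32_33: "rho_of 3 2 c $$ (3,3) = Complex ((1) / 4) (0)"
  by (simp add: rho_entry sps pe_def complex_eq_iff)
lemma re33_00: "rho_of 3 3 c $$ (0,0) = Complex ((1 + c 3 3) / 4) (0)"
  by (simp add: rho_entry sps pe_def complex_eq_iff)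
lemma re33_01: "rho_of 3 3 c $$ (0,1) = Complex (0) (0)"
  by (simp add: rho_entry sps pe_def complex_eq_iff)
lemma re33_02: "rho_of 3 3 c $$ (0,2) = Complex (0) (0)"
  by (simp add: rho_entry sps pe_def complex_eq_iff)
lemma re33_03: "rho_of 3 3 c $$ (0,3) = Complex ((c 1 1 - c 2 2) / 4) ((- c 1 2 - c 2 1) / 4)"
  by (simp add: rho_entry sps pe_def complex_eq_iff)
lemma re33_10: "rho_of 3 3 c $$ (1,0) = Complex (0) (0)"
  by (simp add: rho_entry sps pe_def complex_eq_iff)
lemma re33_11: "rho_of 3 3 c $$ (1,1) = Complex ((1 - c 3 3) / 4) (0)"
  by (simp add: rho_entry sps pe_def complex_eq_iff)
lemma re33_12: "rho_of 3 3 c $$ (1,2) = Complex ((c 1 1 + c 2 2) / 4) ((c 1 2 - c 2 1) / 4)"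
  by (simp add: rho_entry sps pe_def complex_eq_iff)
lemma re33_13: "rho_of 3 3 c $$ (1,3) = Complex (0) (0)"
  by (simp add: rho_entry sps pe_def complex_eq_iff)
lemma re33_20: "rho_of 3 3 c $$ (2,0) = Complex (0) (0)"
  by (simp add: rho_entry sps pe_def complex_eq_iff)
lemma re33_21: "rho_of 3 3 c $$ (2,1) = Complex ((c 1 1 + c 2 2) / 4) ((- c 1 2 + c 2 1) / 4)"
  by (simp add: rho_entry sps pe_def complex_eq_iff)
lemma re33_22: "rho_of 3 3 c $$ (2,2) = Complex ((1 - c 3 3) / 4) (0)"
  by (simp add: rho_entry sps pe_def complex_eq_iff)
lemma re33_23: "rho_of 3 3 c $$ (2,3) = Complex (0) (0)"
  by (simp add: rho_entry sps pe_def complex_eq_iff)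
lemma re33_30: "rho_of 3 3 c $$ (3,0) = Complex ((c 1 1 - c 2 2) / 4) ((c 1 2 + c 2 1) / 4)"
  by (simp add: rho_entry sps pe_def complex_eq_iff)
lemma re33_31: "rho_of 3 3 c $$ (3,1) = Complex (0) (0)"
  by (simp add: rho_entry sps pe_def complex_eq_iff)
lemma re33_32: "rho_of 3 3 c $$ (3,2) = Complex (0) (0)"
  by (simp add: rho_entry sps pe_def complex_eq_iff)
lemma re33_33: "rho_of 3 3 c $$ (3,3) = Complex ((1 + c 3 3) / 4) (0)"
  by (simp add: rho_entry sps pe_def complex_eq_iff)
lemmas rho_ents0 = re11_00 re11_01 re11_02 re11_03 re11_10 re11_11 re11_12 re11_13 re11_20 re11_21 re11_22 re11_23 re11_30 re11_31 re11_32 re11_33 re12_00 re12_01 re12_02 re12_03 re12_10 re12_11 re12_12 re12_13 re12_20 re12_21 re12_22 re12_23 re12_30 re12_31 re12_32 re12_33 re13_00 re13_01 re13_02 re13_03 re13_10 re13_11 re13_12 re13_13 re13_20 re13_21 re13_22 re13_23 re13_30 re13_31 re13_32 re13_33 re21_00 re21_01 re21_02 re21_03 re21_10 re21_11 re21_12 re21_13 re21_20 re21_21 re21_22 re21_23 re21_30 re21_31 re21_32 re21_33 re22_00 re22_01 re22_02 re22_03 re22_10 re22_11 re22_12 re22_13 re22_20 re22_21 re22_22 re22_23 re22_30 re22_31 re22_32 re22_33 re23_00 re23_01 re23_02 re23_03 re23_10 re23_11 re23_12 re23_13 re23_20 re23_21 re23_22 re23_23 re23_30 re23_31 re23_32 re23_33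 re31_00 re31_01 re31_02 re31_03 re31_10 re31_11 re31_12 re31_13 re31_20 re31_21 re31_22 re31_23 re31_30 re31_31 re31_32 re31_33 re32_00 re32_01 re32_02 re32_03 re32_10 re32_11 re32_12 re32_13 re32_20 re32_21 re32_22 re32_23 re32_30 re32_31 re32_32 re32_33 re33_00 re33_01 re33_02 re33_03 re33_10 re33_11 re33_12 re33_13 re33_20 re33_21 re33_22 re33_23 re33_30 re33_31 re33_32 re33_33
lemmas rho_ents = rho_ents0 rho_ents0[unfolded One_nat_def]

definition qf :: "complex mat \<Rightarrow> complex vec \<Rightarrow> complex vec \<Rightarrow> complex" where
  "qf M v w = (\<Sum>i<4. \<Sum>j<4. cnj (v $ i) * M $$ (i,j) * w $ j)"

lemma ring4: "(ca*a+cb*b) * m * (\<alpha>*c+\<beta>*(d::complex)) = ca * \<alpha> * (a * m * c) + ca * \<beta> * (a * m * d)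
       + cb * \<alpha> * (b * m * c) + cb * \<beta> * (b * m * d)"
  by (simp add: algebra_simps)

lemma qf_lin:
  assumes v: "v \<in> carrier_vec 4" and w: "w \<in> carrier_vec 4"
  shows "qf M (\<alpha> \<cdot>\<^sub>v v + \<beta> \<cdot>\<^sub>v w) (\<alpha> \<cdot>\<^sub>v v + \<beta> \<cdot>\<^sub>v w) =
    cnj \<alpha> * \<alpha> * qf M v v + cnj \<alpha> * \<beta> * qf M v w + cnj \<beta> * \<alpha> * qf M w v + cnj \<beta> * \<beta> * qf M w w" (is "_ = ?rhs")
proof -
  have "qf M (\<alpha> \<cdot>\<^sub>v v + \<beta> \<cdot>\<^sub>v w) (\<alpha> \<cdot>\<^sub>v v + \<beta> \<cdot>\<^sub>v w) =
    (\<Sum>i<4. \<Sum>j<4. cnj \<alpha> * \<alpha> * (cnj (v $ i) * M $$ (i,j) * v $ j) + cnj \<alpha> * \<beta> * (cnj (v $ i) * M $$ (i,j) * w $ j)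
       + cnj \<beta> * \<alpha> * (cnj (w $ i) * M $$ (i,j) * v $ j) + cnj \<beta> * \<beta> * (cnj (w $ i) * M $$ (i,j) * w $ j))"
    unfolding qf_def
    apply (rule sum.cong[OF refl], rule sum.cong[OF refl])
    using v w apply (simp only: lessThan_iff carrier_vec_def mem_Collect_eq index_add_vec index_smult_vec complex_cnj_add complex_cnj_mult)
    apply (rule ring4)
    done
  also have "\<dots> = ?rhs"
    unfolding qf_def by (simp only: sum.distrib sum_distrib_left)
  finally show ?thesis .
qed

lemma qf_herm:
  assumes "hermitian M" "M \<in> carrier_mat 4 4"
  shows "qf M w v = cnj (qf M v w)"
proof -
  have h: "\<And>i j. i < 4 \<Longrightarrow> j < 4 \<Longrightarrow> cnj (M $$ (i,j)) = M $$ (j,i)"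
  proof -
    fix i j :: nat assume ij: "i < 4" "j < 4"
    from assms(1) have H: "\<forall>i<dim_row M. \<forall>j<dim_col M. M $$ (i,j) = cnj (M $$ (j,i))"
      unfolding hermitian_def by blast
    have d: "dim_row M = 4" "dim_col M = 4" using assms(2) by auto
    have "M $$ (j,i) = cnj (M $$ (i,j))" using H ij unfolding d by blast
    then show "cnj (M $$ (i,j)) = M $$ (j,i)" by (metis complex_cnj_cnj)
  qed
  have "cnj (qf M v w) = (\<Sum>i<4. \<Sum>j<4. v $ i * M $$ (j,i) * cnj (w $ j))"
    unfolding qf_def cnj_sum
    apply (rule sum.cong[OF refl], rule sum.cong[OF refl])
    apply (simp only: lessThan_iff complex_cnj_mult complex_cnj_cnj h)
    done
  also have "\<dots> = (\<Sum>j<4. \<Sum>i<4. v $ i * M $$ (j,i) * cnj (w $ j))"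
    by (rule sum.swap)
  also have "\<dots> = qf M w v"
    unfolding qf_def by (simp only: mult.commute mult.left_commute)
  finally show ?thesis by simp
qed

lemma qf_psd:
  assumes "psd M" "M \<in> carrier_mat 4 4" "v \<in> carrier_vec 4"
  shows "0 \<le> Re (qf M v v)"
  using assms unfolding psd_def qf_def by auto

lemma qf_ineq:
  assumes vs: "valid_state M" and v: "v \<in> carrier_vec 4" and w: "w \<in> carrier_vec 4"
  shows "4 * (cmod (qf M v w))^2 \<le> (Re (qf M v v) + Re (qf M w w))^2"
proof -
  have M: "M \<in> carrier_mat 4 4" "hermitian M" "psd M" using vs unfolding valid_state_def by auto
  define Z where "Z = qf M v w"
  define n where "n = cmod Z"
  define u where "u = complex_of_real n \<cdot>\<^sub>v v + (- cnj Z) \<cdot>\<^sub>v w"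
  have hz: "qf M w v = cnj Z" unfolding Z_def by (rule qf_herm[OF M(2) M(1)])
  have u: "u \<in> carrier_vec 4" using v w unfolding u_def by auto
  have zz: "Z * cnj Z = complex_of_real (n^2)" unfolding n_def by (rule complex_norm_square[symmetric])
  have "qf M u u = complex_of_real (n^2) * qf M v v - complex_of_real n * (Z * cnj Z)
       - complex_of_real n * (Z * cnj Z) + (Z * cnj Z) * qf M w w"
    unfolding u_def qf_lin[OF v w] hz Z_def[symmetric]
    by (simp add: algebra_simps power2_eq_square)
  also have "\<dots> = complex_of_real (n^2) * (qf M v v + qf M w w - 2 * complex_of_real n)"
    unfolding zz by (simp add: algebra_simps power2_eq_square)
  finally have "Re (qf M u u) = n^2 * (Re (qf M v v) + Re (qf M w w) - 2 * n)"
    by simp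
  with qf_psd[OF M(3) M(1) u] have h: "0 \<le> n^2 * (Re (qf M v v) + Re (qf M w w) - 2 * n)" by simp
  have n0: "0 \<le> n" unfolding n_def by simp
  show ?thesis
  proof (cases "n = 0")
    case True then show ?thesis unfolding n_def Z_def by simp
  next
    case False
    then have "0 < n^2" using n0 by simp
    then have "2 * n \<le> Re (qf M v v) + Re (qf M w w)" using h
      by (simp add: zero_le_mult_iff)
    then have "(2 * n)^2 \<le> (Re (qf M v v) + Re (qf M w w))^2"
      using n0 by (intro power_mono) auto
    then show ?thesis unfolding n_def Z_def by (simp add: power_mult_distrib)
  qed
qed

definition evc :: "nat \<Rightarrow> bool \<Rightarrow> nat \<Rightarrow> complex" where
  "evc k s j = (if k = 3 then (if (j = 0) = s then 1 else 0)
     else if j = 0 then 1 else (if k = 1 then 1 else \<i>) * (if s then 1 else -1))"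

definition kvec :: "nat \<Rightarrow> bool \<Rightarrow> nat \<Rightarrow> bool \<Rightarrow> complex vec" where
  "kvec a sa b sb = vec 4 (\<lambda>i. evc a sa (i div 2) * evc b sb (i mod 2))"

lemma kvec_carrier: "kvec a sa b sb \<in> carrier_vec 4" unfolding kvec_def by simp

lemma kvec_idx: "kvec a sa b sb $ 0 = evc a sa 0 * evc b sb 0"
  "kvec a sa b sb $ 1 = evc a sa 0 * evc b sb 1"
  "kvec a sa b sb $ 2 = evc a sa 1 * evc b sb 0"
  "kvec a sa b sb $ 3 = evc a sa 1 * evc b sb 1"
  by (simp_all add: kvec_def)

definition nrm :: "nat \<Rightarrow> nat \<Rightarrow> real" where
  "nrm a b = (if a = 3 then 1 else 2) * (if b = 3 then 1 else 2)"
definition sg :: "nat \<Rightarrow> nat \<Rightarrow> real" where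
  "sg a b = (if even (a + b) then -1 else 1)"

lemma qf_vals:
  assumes "a \<in> {1,2,3}" "b \<in> {1,2,3}"
  shows "Re (qf (rho_of a b c) (kvec a True b True) (kvec a True b True)) = nrm a b * (1 + c a b) / 4"
    "Re (qf (rho_of a b c) (kvec a False b False) (kvec a False b False)) = nrm a b * (1 + c a b) / 4"
    "Re (qf (rho_of a b c) (kvec a True b False) (kvec a True b False)) = nrm a b * (1 - c a b) / 4"
    "Re (qf (rho_of a b c) (kvec a False b True) (kvec a False b True)) = nrm a b * (1 - c a b) / 4"
    "(cmod (qf (rho_of a b c) (kvec a True b True) (kvec a False b False)))^2 = (nrm a b)^2 * (TT a b c + 2 * sg a b * DD a b c) / 16"
    "(cmod (qf (rho_of a b c) (kvec a True b False) (kvec a False b True)))^2 = (nrm a b)^2 * (TT a b c - 2 * sg a b * DD a b c) / 16"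
  using assms
  unfolding qf_def sum4 kvec_idx kvec_idx[unfolded One_nat_def] cmod_power2
  by (elim abcases; simp add: rho_ents evc_def nrm_def sg_def TT_def DD_def oth1_def oth2_def; simp add: field_simps power2_eq_square; simp add: algebra_simps)+

lemma cp3: assumes N: "(N :: real mat) \<in> carrier_mat 3 3"
  shows "poly (char_poly N) x =
    (x - N $$ (0,0)) * ((x - N $$ (1,1)) * (x - N $$ (2,2)) - N $$ (1,2) * N $$ (2,1))
    + N $$ (1,0) * (- N $$ (0,1) * (x - N $$ (2,2)) - N $$ (0,2) * N $$ (2,1))
    - N $$ (2,0) * (N $$ (0,1) * N $$ (1,2) + N $$ (0,2) * (x - N $$ (1,1)))"
proof -
  have C: "- char_matrix N x \<in> carrier_mat 3 3" using N by (simp add: char_matrix_def)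
  show ?thesis
    unfolding char_poly_matrix[OF N] det3[OF C]
    using N by (simp add: char_matrix_def algebra_simps)
qed

lemma btb_idx: assumes "i < 3" "j < 3"
  shows "(transpose_mat (betaM a b c) * betaM a b c) $$ (i,j) = (\<Sum>k<3. betaM a b c $$ (k,i) * betaM a b c $$ (k,j))"
  using assms by (simp add: betaM_def scalar_prod_def lessThan_atLeast0)

lemma btb_carrier: "transpose_mat (betaM a b c) * betaM a b c \<in> carrier_mat 3 3"
  by (rule carrier_matI; simp add: betaM_def)

lemma btb_eq: "transpose_mat (betaM a b c) * betaM a b c = mat 3 3 (\<lambda>(i,j). \<Sum>k<3. betaM a b c $$ (k,i) * betaM a b c $$ (k,j))"
  by (rule eq_matI) (simp_all add: btb_idx, simp_all add: betaM_def)

lemma cp_beta: assumes "a \<in> {1,2,3}" "b \<in> {1,2,3}"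
  shows "char_poly (transpose_mat (betaM a b c) * betaM a b c) = [:-((c a b)^2), 1:] * [:(DD a b c)^2, - TT a b c, 1:]"
proof -
  have "poly (char_poly (transpose_mat (betaM a b c) * betaM a b c)) x = poly ([:-((c a b)^2), 1:] * [:(DD a b c)^2, - TT a b c, 1:]) x" for x
    unfolding btb_eq
    apply (subst cp3, simp)
    apply (simp add: sum3)
    using assms
    by (elim abcases; simp add: betaM_def sps; simp add: TT_def DD_def oth1_def oth2_def numeral_2_eq_2 numeral_3_eq_3; simp add: algebra_simps power2_eq_square)
  then show ?thesis using poly_eq_poly_eq_iff by blast
qed

lemma top2: fixes x y z :: real
  shows "sum_list (take 2 (rev (sorted_list_of_multiset {#x,y,z#}))) = x + y + z - min x (min y z)"
proof -
  define l where "l = sorted_list_of_multiset {#x,y,z#}"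
  have m: "mset l = {#x,y,z#}" unfolding l_def by simp
  have "length l = 3" using arg_cong[OF m, of size] by simp
  then obtain l0 l1 l2 where l: "l = [l0,l1,l2]"
    by (metis (no_types, opaque_lifting) length_0_conv length_Suc_conv numeral_3_eq_3)
  have s: "sorted l" unfolding l_def by simp
  then have o: "l0 \<le> l1" "l1 \<le> l2" unfolding l by auto
  have "sum_list l = sum_mset (mset l)" by (simp add: sum_mset_sum_list)
  also have "\<dots> = x + y + z" unfolding m by simp
  finally have sm: "l0 + l1 + l2 = x + y + z" unfolding l by simp
  have "set l = set_mset (mset l)" by simp
  also have "\<dots> = {x,y,z}" unfolding m by simp
  finally have st: "{l0,l1,l2} = {x,y,z}" unfolding l by simp
  have "l0 = min x (min y z)"
  proof -
    have "x \<in> {l0,l1,l2}" "y \<in> {l0,l1,l2}" "z \<in> {l0,l1,l2}" "l0 \<in> {x,y,z}" using st by auto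
    then show ?thesis using o by auto
  qed
  then show ?thesis unfolding l_def[symmetric] l using sm by simp
qed

lemma quad_factor: fixes r1 r2 T P :: real
  assumes "r1 + r2 = T" "r1 * r2 = P"
  shows "[:P, -T, 1:] = [:-r1, 1:] * [:-r2, 1:]"
  using assms by (simp add: algebra_simps)

lemma proots3: fixes e2 r1 r2 :: real
  shows "proots ([:-e2, 1:] * ([:-r1, 1:] * [:-r2, 1:])) = {#e2, r1, r2#}"
proof -
  have nz: "[:-x, 1:] \<noteq> (0 :: real poly)" for x by simp
  have nz2: "[:-r1, 1:] * [:-r2, 1:] \<noteq> (0 :: real poly)" using nz by (simp only: mult_eq_0_iff) simp
  have a: "proots ([:-e2, 1:] * ([:-r1, 1:] * [:-r2, 1:])) = proots [:-e2, 1:] + proots ([:-r1, 1:] * [:-r2, 1:])"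
    by (rule proots_mult[OF nz nz2])
  have b: "proots ([:-r1, 1:] * [:-r2, 1:]) = proots [:-r1, 1:] + proots [:-r2, 1:]"
    by (rule proots_mult[OF nz nz])
  show ?thesis unfolding a b by simp
qed

lemma TD_bound: fixes p q r s :: real
  shows "4 * (p * s - q * r)^2 \<le> (p^2 + q^2 + r^2 + s^2)^2"
proof -
  have a: "0 \<le> (p^2 + q^2 + r^2 + s^2) - 2 * (p * s - q * r)"
  proof -
    have "(p^2 + q^2 + r^2 + s^2) - 2 * (p * s - q * r) = (p - s)^2 + (q + r)^2" by (simp add: algebra_simps power2_eq_square)
    then show ?thesis by simp
  qed
  have b: "0 \<le> (p^2 + q^2 + r^2 + s^2) + 2 * (p * s - q * r)"
  proof -
    have "(p^2 + q^2 + r^2 + s^2) + 2 * (p * s - q * r) = (p + s)^2 + (q - r)^2" by (simp add: algebra_simps power2_eq_square)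
    then show ?thesis by simp
  qed
  have "0 \<le> ((p^2 + q^2 + r^2 + s^2) - 2 * (p * s - q * r)) * ((p^2 + q^2 + r^2 + s^2) + 2 * (p * s - q * r))"
    using a b by simp
  then show ?thesis by (simp add: algebra_simps power2_eq_square)
qed

lemma core: fixes e T D :: real
  assumes e1: "0 \<le> 1 + e" and e2: "0 \<le> 1 - e" and h1: "T + 2*D \<le> (1+e)^2" and h2: "T - 2*D \<le> (1-e)^2"
    and t1: "0 \<le> T + 2*D" and t2: "0 \<le> T - 2*D"
  shows "(e^2 + (T + sqrt (T^2 - 4*D^2))/2 + (T - sqrt (T^2 - 4*D^2))/2
           - min (e^2) (min ((T + sqrt (T^2 - 4*D^2))/2) ((T - sqrt (T^2 - 4*D^2))/2)) = 2)
         \<longleftrightarrow> e^2 + T = 3"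
proof -
  define u where "u = sqrt (T + 2*D)"
  define w where "w = sqrt (T - 2*D)"
  have u0: "0 \<le> u" and w0: "0 \<le> w" unfolding u_def w_def using t1 t2 by auto
  have uu: "u^2 = T + 2*D" unfolding u_def using t1 by simp
  have ww: "w^2 = T - 2*D" unfolding w_def using t2 by simp
  have "sqrt (T^2 - 4*D^2) = sqrt ((T + 2*D) * (T - 2*D))" by (simp add: algebra_simps power2_eq_square)
  also have "\<dots> = u * w" unfolding u_def w_def by (rule real_sqrt_mult)
  finally have sq: "sqrt (T^2 - 4*D^2) = u * w" .
  have T: "T = (u^2 + w^2) / 2" using uu ww by simp
  have r1: "(T + sqrt (T^2 - 4*D^2))/2 = ((u + w)/2)^2" unfolding sq by (subst T, simp add: power2_eq_square field_simps)
  have r2: "(T - sqrt (T^2 - 4*D^2))/2 = ((u - w)/2)^2" unfolding sq by (subst T, simp add: power2_eq_square field_simps)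
  have ub: "u \<le> 1 + e" using h1 uu e1 u0 by (metis abs_le_square_iff abs_of_nonneg)
  have wb: "w \<le> 1 - e" using h2 ww e2 w0 by (metis abs_le_square_iff abs_of_nonneg)
  have "\<bar>e\<bar> \<le> 1" using e1 e2 by linarith
  then have eb: "e^2 \<le> 1" by (simp add: abs_square_le_1)
  define s1 where "s1 = (u + w)/2"
  define s2 where "s2 = (u - w)/2"
  have s1b: "s1 \<le> 1" "0 \<le> s1" unfolding s1_def using ub wb u0 w0 by auto
  have s2b: "\<bar>s2\<bar> \<le> s1" unfolding s1_def s2_def using u0 w0 by auto
  have r2r1: "s2^2 \<le> s1^2" using s2b by (metis abs_le_square_iff abs_of_nonneg s1b(2))
  have s1sq: "s1^2 \<le> 1" using s1b by (simp add: power_le_one)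
  have Ts: "T = s1^2 + s2^2" unfolding T s1_def s2_def by (simp add: power2_eq_square field_simps)
  have mn: "min (s1^2) (s2^2) = s2^2" using r2r1 by simp
  show ?thesis
    unfolding r1 r2 unfolding s1_def[symmetric] s2_def[symmetric] unfolding mn unfolding Ts
  proof
    assume M: "e^2 + s1^2 + s2^2 - min (e^2) (s2^2) = 2"
    show "e^2 + (s1^2 + s2^2) = 3"
    proof (cases "e^2 \<le> s2^2")
      case True
      then have "s1^2 + s2^2 = 2" using M by simp
      then have a: "s1^2 = 1" "s2^2 = 1" using s1sq r2r1 by linarith+
      then have "s1 = 1" using s1b by (simp add: power2_eq_1_iff)
      have "\<bar>s2\<bar> = 1" using a(2) by (auto simp: power2_eq_1_iff)
      then have "u + w = 2" "\<bar>u - w\<bar> = 2" using \<open>s1 = 1\<close> unfolding s1_def s2_def by auto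
      then have "(u = 2 \<and> w = 0) \<or> (u = 0 \<and> w = 2)" using u0 w0 by (auto simp: abs_if split: if_splits)
      then have "e^2 = 1" using ub wb eb e1 e2
        by (auto simp: power2_eq_1_iff)
      then show ?thesis using a by simp
    next
      case False
      then have "e^2 + s1^2 = 2" using M by simp
      then have a: "e^2 = 1" "s1^2 = 1" using s1sq eb by linarith+
      then have "s1 = 1" using s1b by (simp add: power2_eq_1_iff)
      then have uw: "u + w = 2" unfolding s1_def by simp
      from a have "e = 1 \<or> e = -1" by (simp add: power2_eq_1_iff)
      then have "(u = 2 \<and> w = 0) \<or> (u = 0 \<and> w = 2)" using ub wb u0 w0 uw by auto
      then have "s2^2 = 1" unfolding s2_def by auto
      then show ?thesis using a by simp
    qed
  next
    assume P: "e^2 + (s1^2 + s2^2) = 3"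
    then have a: "e^2 = 1" "s1^2 = 1" "s2^2 = 1" using eb s1sq r2r1 by linarith+
    then show "e^2 + s1^2 + s2^2 - min (e^2) (s2^2) = 2" by simp
  qed
qed

lemma corr_rho: assumes "a \<in> {1,2,3}" "b \<in> {1,2,3}"
  shows "corr (rho_of a b c) = betaM a b c"
  apply (rule eq_matI)
  apply (simp_all add: corr_def betaM_def)
  apply (simp only: less3)
  using assms
  apply (elim abcases disjE; simp add: mtrace_mult4[OF rho_carrier kron_carrier] sum4 rho_ents kron_pauli_idx sps pe_def; simp add: field_simps numeral_2_eq_2 numeral_3_eq_3)
  done

lemma purity: assumes "a \<in> {1,2,3}" "b \<in> {1,2,3}"
  shows "mtrace (rho_of a b c * rho_of a b c) = complex_of_real ((1 + (c a b)^2 + TT a b c) / 4)"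
  using assms
  by (elim abcases; simp only: mtrace_mult4[OF rho_carrier rho_carrier] sum4; simp add: rho_ents TT_def oth1_def oth2_def complex_eq_iff; simp add: field_simps power2_eq_square numeral_2_eq_2 numeral_3_eq_3)

lemma TD_lin: "0 \<le> TT a b c + 2 * DD a b c" "0 \<le> TT a b c - 2 * DD a b c"
proof -
  define p where "p = c (oth1 a) (oth1 b)"
  define q where "q = c (oth1 a) (oth2 b)"
  define r where "r = c (oth2 a) (oth1 b)"
  define s where "s = c (oth2 a) (oth2 b)"
  have "TT a b c + 2 * DD a b c = (p + s)^2 + (q - r)^2"
    unfolding TT_def DD_def p_def q_def r_def s_def by (simp add: algebra_simps power2_eq_square)
  then show "0 \<le> TT a b c + 2 * DD a b c" by simp
  have "TT a b c - 2 * DD a b c = (p - s)^2 + (q + r)^2"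
    unfolding TT_def DD_def p_def q_def r_def s_def by (simp add: algebra_simps power2_eq_square)
  then show "0 \<le> TT a b c - 2 * DD a b c" by simp
qed

lemma sg_sq: "(sg a b)^2 = 1" unfolding sg_def by simp

lemma nrm_pos: "0 < nrm a b" unfolding nrm_def by simp

lemma psd_consequences:
  assumes ab: "a \<in> {1,2,3}" "b \<in> {1,2,3}" and vs: "valid_state (rho_of a b c)"
  shows "0 \<le> 1 + c a b" "0 \<le> 1 - c a b"
    "TT a b c + 2 * (sg a b * DD a b c) \<le> (1 + c a b)^2"
    "TT a b c - 2 * (sg a b * DD a b c) \<le> (1 - c a b)^2"
proof -
  let ?r = "rho_of a b c"
  have M: "?r \<in> carrier_mat 4 4" "psd ?r" using vs unfolding valid_state_def by auto
  note V = qf_vals[OF ab, of c]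
  have n: "0 < nrm a b" by (rule nrm_pos)
  have "0 \<le> Re (qf ?r (kvec a True b True) (kvec a True b True))" by (rule qf_psd[OF M(2) M(1) kvec_carrier])
  then have "0 \<le> nrm a b * (1 + c a b)" unfolding V by simp
  then show "0 \<le> 1 + c a b" using n by (simp add: zero_le_mult_iff)
  have "0 \<le> Re (qf ?r (kvec a True b False) (kvec a True b False))" by (rule qf_psd[OF M(2) M(1) kvec_carrier])
  then have "0 \<le> nrm a b * (1 - c a b)" unfolding V by simp
  then show "0 \<le> 1 - c a b" using n by (simp add: zero_le_mult_iff)
  have "4 * (cmod (qf ?r (kvec a True b True) (kvec a False b False)))^2 \<le>
     (Re (qf ?r (kvec a True b True) (kvec a True b True)) + Re (qf ?r (kvec a False b False) (kvec a False b False)))^2"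
    by (rule qf_ineq[OF vs kvec_carrier kvec_carrier])
  then have "(nrm a b)^2 * (TT a b c + 2 * sg a b * DD a b c) \<le> (nrm a b)^2 * (1 + c a b)^2"
    unfolding V by (simp add: power2_eq_square field_simps)
  then show "TT a b c + 2 * (sg a b * DD a b c) \<le> (1 + c a b)^2" using n by (simp add: mult.assoc)
  have "4 * (cmod (qf ?r (kvec a True b False) (kvec a False b True)))^2 \<le>
     (Re (qf ?r (kvec a True b False) (kvec a True b False)) + Re (qf ?r (kvec a False b True) (kvec a False b True)))^2"
    by (rule qf_ineq[OF vs kvec_carrier kvec_carrier])
  then have "(nrm a b)^2 * (TT a b c - 2 * sg a b * DD a b c) \<le> (nrm a b)^2 * (1 - c a b)^2"
    unfolding V by (simp add: power2_eq_square field_simps)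
  then show "TT a b c - 2 * (sg a b * DD a b c) \<le> (1 - c a b)^2" using n by (simp add: mult.assoc)
qed

lemma horo_val:
  assumes ab: "a \<in> {1,2,3}" "b \<in> {1,2,3}"
  shows "horodecki_M (rho_of a b c) =
    (c a b)^2 + (TT a b c + sqrt ((TT a b c)^2 - 4 * (DD a b c)^2))/2 + (TT a b c - sqrt ((TT a b c)^2 - 4 * (DD a b c)^2))/2
     - min ((c a b)^2) (min ((TT a b c + sqrt ((TT a b c)^2 - 4 * (DD a b c)^2))/2) ((TT a b c - sqrt ((TT a b c)^2 - 4 * (DD a b c)^2))/2))"
proof -
  define T where "T = TT a b c"
  define D where "D = DD a b c"
  define r1 where "r1 = (T + sqrt (T^2 - 4 * D^2))/2"
  define r2 where "r2 = (T - sqrt (T^2 - 4 * D^2))/2"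
  have TD: "4 * D^2 \<le> T^2" unfolding T_def D_def TT_def DD_def by (rule TD_bound)
  have s: "sqrt (T^2 - 4 * D^2) * sqrt (T^2 - 4 * D^2) = T^2 - 4 * D^2" using TD by simp
  have "r1 + r2 = T" unfolding r1_def r2_def by (simp add: field_simps)
  moreover have "r1 * r2 = D^2"
  proof -
    have "r1 * r2 = (T^2 - (sqrt (T^2 - 4 * D^2))^2) / 4" unfolding r1_def r2_def
      by (simp add: field_simps power2_eq_square)
    also have "(sqrt (T^2 - 4 * D^2))^2 = T^2 - 4 * D^2" using TD by simp
    finally show ?thesis by simp
  qed
  ultimately have qf: "[:D^2, -T, 1:] = [:-r1, 1:] * [:-r2, 1:]" by (rule quad_factor)
  have "horodecki_M (rho_of a b c) = sum_list (take 2 (rev (sorted_list_of_multiset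
        (proots ([:-((c a b)^2), 1:] * ([:-r1, 1:] * [:-r2, 1:]))))))"
    unfolding horodecki_M_def Let_def eigvals_ms_def corr_rho[OF ab] cp_beta[OF ab]
    unfolding T_def[symmetric] D_def[symmetric] qf ..
  also have "\<dots> = (c a b)^2 + r1 + r2 - min ((c a b)^2) (min r1 r2)"
    unfolding proots3 top2 ..
  finally show ?thesis unfolding r1_def r2_def T_def D_def .
qed

theorem proposition6:
  fixes \<rho> :: "complex mat" and a b :: nat and c :: "nat \<Rightarrow> nat \<Rightarrow> real"
  assumes "a \<in> {1, 2, 3}" and "b \<in> {1, 2, 3}"
    and "valid_state \<rho>"
    and "\<rho> = (1 / 4 :: complex) \<cdot>\<^sub>m (kron (pauli 0) (pauli 0) +
           msum 4 (support_pairs a b) (\<lambda>q. complex_of_real (c (fst q) (snd q)) \<cdot>\<^sub>m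
               kron (pauli (fst q)) (pauli (snd q))))"
  shows "horodecki_M \<rho> = 2 \<longleftrightarrow> mtrace (\<rho> * \<rho>) = 1"
proof -
  have r: "\<rho> = rho_of a b c" unfolding rho_of_def using assms(4) .
  have ab: "a \<in> {1,2,3}" "b \<in> {1,2,3}" using assms(1,2) by auto
  have vs: "valid_state (rho_of a b c)" using assms(3) unfolding r .
  note P = psd_consequences[OF ab vs]
  define e where "e = c a b"
  define T where "T = TT a b c"
  define D where "D = sg a b * DD a b c"
  have DD: "(DD a b c)^2 = D^2" unfolding D_def using sg_sq[of a b] by (simp add: power_mult_distrib)
  have t: "0 \<le> T + 2 * D" "0 \<le> T - 2 * D"
    unfolding T_def D_def sg_def using TD_lin[of a b c] by auto
  have core': "(e^2 + (T + sqrt (T^2 - 4*D^2))/2 + (T - sqrt (T^2 - 4*D^2))/2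
           - min (e^2) (min ((T + sqrt (T^2 - 4*D^2))/2) ((T - sqrt (T^2 - 4*D^2))/2)) = 2)
         \<longleftrightarrow> e^2 + T = 3"
    by (rule core) (use P t in \<open>simp_all add: e_def T_def D_def\<close>)
  have h: "horodecki_M \<rho> = 2 \<longleftrightarrow> e^2 + T = 3"
    unfolding r horo_val[OF ab] DD using core' unfolding e_def T_def .
  have p: "mtrace (\<rho> * \<rho>) = 1 \<longleftrightarrow> e^2 + T = 3"
  proof -
    have "mtrace (\<rho> * \<rho>) = 1 \<longleftrightarrow> complex_of_real ((1 + e^2 + T) / 4) = complex_of_real 1"
      unfolding r purity[OF ab] e_def T_def by simp
    also have "\<dots> \<longleftrightarrow> e^2 + T = 3" by (simp only: of_real_eq_iff) (auto simp: field_simps)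
    finally show ?thesis .
  qed
  show ?thesis using h p by simp
qed

end
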